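(* Let $D$ be an integral domain, $n\ge0$, $u_1,\dots,u_n\in D^*$, $R_n=D[Z_0,\dots,Z_n]$ a polynomial ring in $n+1$ variables over $D$, and $a_1,\dots,a_n,b_1,\dots,b_n$ positive integers with $\gcd(a_i,b_1\cdots b_i)=1$ for each $i\in\{1,\dots,n\}$. Then $$I_n:=\big(u_1Z_1^{a_1}+Z_0^{b_1},\dots,u_nZ_n^{a_n}+Z_{n-1}^{b_n}\big)$$ is a prime ideal of $R_n$ and $Z_n\notin I_n$. *)

theory Defs
  imports "HOL-Library.Poly_Mapping" "HOL-Algebra.Ideal"
begin

text \<open>Multivariate polynomials over a commutative ring 'a, in the variables
  Z_0, Z_1, Z_2, ... (indexed by nat): a polynomial is a finitely supported map
  from monomials (finitely supported exponent vectors) to coefficients.\<close>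

type_synonym 'a mpoly = "(nat \<Rightarrow>\<^sub>0 nat) \<Rightarrow>\<^sub>0 'a"

definition mvars :: "'a::zero mpoly \<Rightarrow> nat set" where
  "mvars p = (\<Union>m\<in>Poly_Mapping.keys p. Poly_Mapping.keys m)"

definition Var :: "nat \<Rightarrow> 'a::{zero,one} mpoly" where
  "Var i = Poly_Mapping.single (Poly_Mapping.single i 1) 1"

definition Const :: "'a::zero \<Rightarrow> 'a mpoly" where
  "Const c = Poly_Mapping.single 0 c"

definition poly_ring_upto :: "nat \<Rightarrow> ('a::comm_ring_1 mpoly) ring" where
  "poly_ring_upto n = \<lparr>carrier = {p. mvars p \<subseteq> {0..n}}, mult = (*), one = 1,
                        zero = 0, add = (+)\<rparr>"

end

theory Submission imports Defs "HOL-Algebra.Algebraic_Closure_Type" begin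

abbreviation lk where "lk \<equiv> Poly_Mapping.lookup"
abbreviation ks where "ks \<equiv> Poly_Mapping.keys"
abbreviation sg where "sg \<equiv> Poly_Mapping.single"

lemma mpoly_expand:
  fixes p :: "'a::comm_ring_1 mpoly"
  shows "p = (\<Sum>m\<in>ks p. sg m (lk p m))"
proof (rule poly_mapping_eqI)
  fix k
  have "lk (\<Sum>m\<in>ks p. sg m (lk p m)) k = (\<Sum>m\<in>ks p. (lk p m when m = k))"
    by (simp add: lookup_sum lookup_single)
  also have "\<dots> = lk p k"
  proof (cases "k \<in> ks p")
    case True
    then show ?thesis
      by (subst sum.remove[OF finite_keys True]) (auto simp: when_def intro!: sum.neutral)
  next
    case False
    then show ?thesis by (auto simp: when_def in_keys_iff intro!: sum.neutral)
  qed
  finally show "lk p k = lk (\<Sum>m\<in>ks p. sg m (lk p m)) k" by simp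
qed

lemma Var_pow: "(Var i :: 'a::comm_ring_1 mpoly) ^ k = sg (sg i k) 1"
proof (induction k)
  case 0
  then show ?case by simp
next
  case (Suc k)
  then show ?case
    by (simp add: Var_def mult_single single_add[symmetric] add.commute)
qed

lemma Const_mult_single: "Const c * sg m d = sg m (c * d)"
  by (simp add: Const_def mult_single)

lemma mvars_sub_iff: "mvars p \<subseteq> A \<longleftrightarrow> (\<forall>m\<in>ks p. ks m \<subseteq> A)"
  by (auto simp: mvars_def)

lemma keys_nat_add: "ks ((m::nat \<Rightarrow>\<^sub>0 nat) + m') = ks m \<union> ks m'"
  by (auto simp: in_keys_iff lookup_add)

lemma mvars_add: "mvars (p + q) \<subseteq> mvars p \<union> mvars q"
  using keys_add[of p q] by (auto simp: mvars_def)

lemma mvars_mult: "mvars ((p::'a::comm_ring_1 mpoly) * q) \<subseteq> mvars p \<union> mvars q"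
  using keys_mult[of p q] by (force simp: mvars_def keys_nat_add)

lemma mvars_uminus: "mvars (- (p::'a::comm_ring_1 mpoly)) = mvars p"
  by (simp add: mvars_def)

lemma mvars_one: "mvars (1::'a::comm_ring_1 mpoly) = {}"
  by (simp add: mvars_def)

lemma mvars_zero: "mvars (0::'a::comm_ring_1 mpoly) = {}"
  by (simp add: mvars_def)

lemma mvars_single: "mvars (sg m c) \<subseteq> ks m"
  by (simp add: mvars_def)


definition emb :: "'a::idom \<Rightarrow> 'a fract alg_closure" where
  "emb x = to_ac (Fract x 1)"

lemma emb_add: "emb (x + y) = emb x + emb y"
proof -
  have "Fract (x + y) 1 = Fract x 1 + Fract y 1" by simp
  then show ?thesis by (simp only: emb_def to_ac_add)
qed
lemma emb_mult: "emb (x * y) = emb x * emb y"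
proof -
  have "Fract (x * y) 1 = Fract x 1 * Fract y 1" by simp
  then show ?thesis by (simp only: emb_def to_ac_mult)
qed
lemma emb_uminus: "emb (- x) = - emb x"
proof -
  have "Fract (- x) 1 = - Fract x 1" by simp
  then show ?thesis by (simp only: emb_def to_ac_minus)
qed
lemma emb_0 [simp]: "emb 0 = 0"
  by (simp add: emb_def Zero_fract_def[symmetric])
lemma emb_1 [simp]: "emb 1 = 1"
  by (simp add: emb_def One_fract_def[symmetric])
lemma emb_eq_0_iff [simp]: "emb x = 0 \<longleftrightarrow> x = 0"
  by (simp add: emb_def Zero_fract_def eq_fract)

definition wt :: "nat \<Rightarrow> (nat \<Rightarrow> nat) \<Rightarrow> (nat \<Rightarrow>\<^sub>0 nat) \<Rightarrow> nat" where
  "wt n e m = (\<Sum>i\<le>n. lk m i * e i)"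
definition gm :: "nat \<Rightarrow> (nat \<Rightarrow> 'b::comm_ring_1) \<Rightarrow> (nat \<Rightarrow>\<^sub>0 nat) \<Rightarrow> 'b" where
  "gm n c m = (\<Prod>i\<le>n. c i ^ lk m i)"
definition phi :: "nat \<Rightarrow> (nat \<Rightarrow> 'a::idom fract alg_closure) \<Rightarrow> (nat \<Rightarrow> nat) \<Rightarrow> 'a mpoly
    \<Rightarrow> 'a fract alg_closure poly" where
  "phi n c e p = (\<Sum>m\<in>ks p. monom (emb (lk p m) * gm n c m) (wt n e m))"

lemma wt_add: "wt n e (m + m') = wt n e m + wt n e m'"
  by (simp add: wt_def lookup_add algebra_simps sum.distrib)
lemma gm_add: "gm n c (m + m') = gm n c m * gm n c m'"
  by (simp add: gm_def lookup_add power_add prod.distrib)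
lemma wt_0 [simp]: "wt n e 0 = 0"
  by (simp add: wt_def)
lemma gm_0 [simp]: "gm n c 0 = 1"
  by (simp add: gm_def)
lemma wt_single: "i \<le> n \<Longrightarrow> wt n e (sg i k) = k * e i"
proof -
  assume i: "i \<le> n"
  have "wt n e (sg i k) = (\<Sum>j\<le>n. if j = i then k * e i else 0)"
    unfolding wt_def by (intro sum.cong) (auto simp: lookup_single when_def)
  also have "\<dots> = k * e i" using i by (simp add: sum.delta)
  finally show ?thesis .
qed
lemma gm_single: "i \<le> n \<Longrightarrow> gm n c (sg i k) = c i ^ k"
proof -
  assume i: "i \<le> n"
  have "gm n c (sg i k) = (\<Prod>j\<le>n. if j = i then c i ^ k else 1)"
    unfolding gm_def by (intro prod.cong) (auto simp: lookup_single when_def)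
  also have "\<dots> = c i ^ k" using i by (simp add: prod.delta)
  finally show ?thesis .
qed
lemma gm_nonzero: "(\<forall>i\<le>n. c i \<noteq> 0) \<Longrightarrow> gm n c m \<noteq> (0::'b::idom)"
  by (simp add: gm_def)

lemma phi_superset:
  assumes "finite A" "ks p \<subseteq> A"
  shows "phi n c e p = (\<Sum>m\<in>A. monom (emb (lk p m) * gm n c m) (wt n e m))"
  unfolding phi_def
  by (rule sum.mono_neutral_left) (use assms in \<open>auto simp: in_keys_iff\<close>)

lemma phi_add: "phi n c e (p + q) = phi n c e p + phi n c e q"
proof -
  let ?A = "ks p \<union> ks q"
  have "phi n c e (p + q) = (\<Sum>m\<in>?A. monom (emb (lk (p+q) m) * gm n c m) (wt n e m))"
    by (rule phi_superset) (auto dest: subsetD[OF keys_add])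
  also have "\<dots> = (\<Sum>m\<in>?A. monom (emb (lk p m) * gm n c m) (wt n e m))
      + (\<Sum>m\<in>?A. monom (emb (lk q m) * gm n c m) (wt n e m))"
    by (simp add: lookup_add emb_add distrib_right add_monom sum.distrib[symmetric])
  also have "\<dots> = phi n c e p + phi n c e q"
    by (subst (1 2) phi_superset[of ?A]) auto
  finally show ?thesis .
qed

lemma phi_0 [simp]: "phi n c e 0 = 0"
  by (simp add: phi_def)

lemma phi_single: "phi n c e (sg m x) = monom (emb x * gm n c m) (wt n e m)"
  by (cases "x = 0") (simp_all add: phi_def)

lemma phi_sum: "finite A \<Longrightarrow> phi n c e (\<Sum>x\<in>A. f x) = (\<Sum>x\<in>A. phi n c e (f x))"
  by (induction A rule: finite_induct) (simp_all add: phi_add)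

lemma phi_uminus: "phi n c e (- p) = - phi n c e p"
  using phi_add[of n c e p "-p"] by (metis add.commute eq_neg_iff_add_eq_0 phi_0 add.right_inverse)

lemma phi_diff: "phi n c e (p - q) = phi n c e p - phi n c e q"
  using phi_add[of n c e p "-q"] phi_uminus[of n c e q] by simp

lemma phi_mult: "phi n c e (p * q) = phi n c e p * phi n c e q"
proof -
  have "p * q = (\<Sum>m\<in>ks p. sg m (lk p m)) * (\<Sum>m'\<in>ks q. sg m' (lk q m'))"
    by (subst (1) mpoly_expand[of p], subst (1) mpoly_expand[of q]) (rule refl)
  also have "\<dots> = (\<Sum>m\<in>ks p. \<Sum>m'\<in>ks q. sg (m + m') (lk p m * lk q m'))"
    by (simp add: sum_product mult_single)
  finally have pq: "p * q = \<dots>" .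
  have "phi n c e (p * q) = (\<Sum>m\<in>ks p. \<Sum>m'\<in>ks q.
          monom (emb (lk p m) * gm n c m) (wt n e m) * monom (emb (lk q m') * gm n c m') (wt n e m'))"
    unfolding pq
    by (simp add: phi_sum phi_single mult_monom emb_mult gm_add wt_add algebra_simps)
  also have "\<dots> = phi n c e p * phi n c e q"
    by (simp add: phi_def sum_product)
  finally show ?thesis .
qed

lemma phi_1 [simp]: "phi n c e 1 = 1"
  using phi_single[of n c e 0 1] by (simp add: one_pCons monom_0)


definition ew :: "(nat \<Rightarrow> nat) \<Rightarrow> (nat \<Rightarrow> nat) \<Rightarrow> nat \<Rightarrow> nat \<Rightarrow> nat" where
  "ew a b n i = (\<Prod>j\<in>{1..i}. b j) * (\<Prod>j\<in>{Suc i..n}. a j)"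

lemma ew_Suc: "i \<le> n \<Longrightarrow> ew a b (Suc n) i = ew a b n i * a (Suc n)"
  by (simp add: ew_def)

lemma ew_top: "ew a b n n = (\<Prod>j\<in>{1..n}. b j)"
  by (simp add: ew_def)

lemma wt_inj_aux:
  assumes "\<forall>i\<in>{1..n}. a i > 0" "\<forall>i\<in>{1..n}. coprime (a i) (\<Prod>j=1..i. b j)"
    "\<forall>i\<in>{1..n}. f i < a i \<and> g i < a i"
    "(\<Sum>i\<le>n. f i * ew a b n i) = (\<Sum>i\<le>n. g i * ew a b n i)"
  shows "\<forall>i\<le>n. f i = (g i :: nat)"
  using assms
proof (induction n)
  case 0
  then show ?case by (simp add: ew_def)
next
  case (Suc n)
  define A where "A = a (Suc n)"
  define B where "B = (\<Prod>j=1..Suc n. b j)"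
  define SF where "SF = (\<Sum>i\<le>n. f i * ew a b n i)"
  define SG where "SG = (\<Sum>i\<le>n. g i * ew a b n i)"
  have sf: "(\<Sum>i\<le>Suc n. f i * ew a b (Suc n) i) = A * SF + f (Suc n) * B"
    unfolding SF_def A_def B_def
    by (simp add: ew_Suc ew_top sum_distrib_left algebra_simps)
  have sg: "(\<Sum>i\<le>Suc n. g i * ew a b (Suc n) i) = A * SG + g (Suc n) * B"
    unfolding SG_def A_def B_def
    by (simp add: ew_Suc ew_top sum_distrib_left algebra_simps)
  have eq: "A * SF + f (Suc n) * B = A * SG + g (Suc n) * B"
    using Suc.prems(4) sf sg by simp
  have cop: "coprime A B"
    unfolding A_def B_def by (rule bspec[OF Suc.prems(2)]) simp
  have A0: "A > 0" and fl: "f (Suc n) < A" and gl: "g (Suc n) < A"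
    using Suc.prems(1-3) by (auto simp: A_def B_def)
  have "(f (Suc n) * B) mod A = (g (Suc n) * B) mod A"
    using arg_cong[OF eq, of "\<lambda>x. x mod A"] by simp
  then have "int (f (Suc n) * B) mod int A = int (g (Suc n) * B) mod int A"
    by (simp only: of_nat_mod[symmetric])
  then have "int A dvd int (f (Suc n) * B) - int (g (Suc n) * B)"
    by (simp only: mod_eq_dvd_iff)
  then have "int A dvd (int (f (Suc n)) - int (g (Suc n))) * int B"
    by (simp add: algebra_simps)
  moreover have "coprime (int A) (int B)" using cop by simp
  ultimately have "int A dvd int (f (Suc n)) - int (g (Suc n))"
    using coprime_dvd_mult_left_iff by blast
  then have top: "f (Suc n) = g (Suc n)"
  proof -
    assume d: "int A dvd int (f (Suc n)) - int (g (Suc n))"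
    show ?thesis
    proof (rule ccontr)
      assume ne: "f (Suc n) \<noteq> g (Suc n)"
      then have "\<bar>int A\<bar> \<le> \<bar>int (f (Suc n)) - int (g (Suc n))\<bar>"
        using dvd_imp_le_int[OF _ d] by simp
      then show False using fl gl by linarith
    qed
  qed
  then have "SF = SG" using eq A0 by simp
  then have "\<forall>i\<le>n. f i = g i"
    using Suc.IH Suc.prems(1-3) unfolding SF_def SG_def by auto
  then show ?case using top le_Suc_eq by auto
qed


primrec croot :: "(nat \<Rightarrow> nat) \<Rightarrow> (nat \<Rightarrow> nat) \<Rightarrow> (nat \<Rightarrow> 'a::idom) \<Rightarrow> nat \<Rightarrow> 'a fract alg_closure" where
  "croot a b u 0 = 1"
| "croot a b u (Suc i) = (SOME x. x ^ a (Suc i) = - (croot a b u i ^ b (Suc i)) / emb (u (Suc i)))"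

lemma croot_eq:
  assumes "a (Suc i) > 0"
  shows "croot a b u (Suc i) ^ a (Suc i) = - (croot a b u i ^ b (Suc i)) / emb (u (Suc i))"
proof -
  have "\<exists>x. x ^ a (Suc i) = - (croot a b u i ^ b (Suc i)) / emb (u (Suc i))"
    using nth_root_exists[OF assms] by blast
  then show ?thesis by (simp only: croot.simps) (rule someI_ex)
qed

lemma croot_props:
  assumes "\<forall>i\<in>{1..n}. a i > 0" "\<forall>i\<in>{1..n}. u i \<noteq> 0"
  shows "\<forall>i\<le>n. croot a b u i \<noteq> 0"
    and "\<forall>i\<in>{1..n}. emb (u i) * croot a b u i ^ a i = - (croot a b u (i - 1) ^ b i)"
proof -
  have eq: "emb (u i) * croot a b u i ^ a i = - (croot a b u (i - 1) ^ b i)" if i: "i \<in> {1..n}" for i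
  proof -
    obtain k where k: "i = Suc k" using i by (cases i) auto
    have "a (Suc k) > 0" "u (Suc k) \<noteq> 0" using assms i k by auto
    then show ?thesis using croot_eq[of a k b u] k by simp
  qed
  show "\<forall>i\<le>n. croot a b u i \<noteq> 0"
  proof (intro allI impI)
    fix i assume "i \<le> n"
    then show "croot a b u i \<noteq> 0"
    proof (induction i)
      case 0
      then show ?case by simp
    next
      case (Suc k)
      have i: "Suc k \<in> {1..n}" using Suc.prems by auto
      have nz: "croot a b u k \<noteq> 0" using Suc by simp
      have apos: "a (Suc k) > 0" using assms i by auto
      have "emb (u (Suc k)) * croot a b u (Suc k) ^ a (Suc k) \<noteq> 0"
        using eq[OF i] nz by simp
      then have "croot a b u (Suc k) ^ a (Suc k) \<noteq> 0" by (metis mult_zero_right)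
      then show ?case by (metis zero_power[OF apos])
    qed
  qed
  show "\<forall>i\<in>{1..n}. emb (u i) * croot a b u i ^ a i = - (croot a b u (i - 1) ^ b i)"
    using eq by blast
qed

lemma ew_rel:
  assumes "i \<in> {1..n}"
  shows "a i * ew a b n i = b i * ew a b n (i - 1)"
proof -
  obtain k where k: "i = Suc k" using assms by (cases i) auto
  have kn: "Suc k \<le> n" using assms k by auto
  have P: "prod a {Suc k..n} = a (Suc k) * prod a {Suc (Suc k)..n}"
    by (rule prod.atLeast_Suc_atMost[OF kn])
  show ?thesis unfolding k ew_def by (simp add: P algebra_simps)
qed

definition red :: "nat \<Rightarrow> (nat \<Rightarrow> nat) \<Rightarrow> (nat \<Rightarrow>\<^sub>0 nat) \<Rightarrow> bool" where
  "red n a m \<longleftrightarrow> (\<forall>i\<in>{1..n}. lk m i < a i)"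

definition Cw :: "(nat \<Rightarrow> nat) \<Rightarrow> nat \<Rightarrow> nat" where
  "Cw b i = (\<Prod>j\<in>{1..i}. b j + 1)"

lemma Cw_pos: "Cw b i > 0"
  by (simp add: Cw_def)

lemma Cw_Suc: "Cw b (Suc k) = Cw b k * (b (Suc k) + 1)"
  by (simp add: Cw_def)

lemma reduce_mono:
  fixes J :: "'a::idom mpoly set"
  assumes Jadd: "\<And>x y. x \<in> J \<Longrightarrow> y \<in> J \<Longrightarrow> x + y \<in> J"
    and Jmul: "\<And>x y. x \<in> J \<Longrightarrow> mvars y \<subseteq> {0..n} \<Longrightarrow> y * x \<in> J"
    and J0: "0 \<in> J"
    and gens: "\<forall>i\<in>{1..n}. Const (u i) * Var i ^ a i + Var (i - 1) ^ b i \<in> J"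
    and units: "\<forall>i\<in>{1..n}. u i dvd 1"
    and pos: "\<forall>i\<in>{1..n}. a i > 0 \<and> b i > 0"
  shows "ks m \<subseteq> {0..n} \<Longrightarrow>
    \<exists>r. mvars r \<subseteq> {0..n} \<and> (\<forall>m'\<in>ks r. red n a m') \<and> sg m x - r \<in> J"
proof (induction "wt n (Cw b) m" arbitrary: m x rule: less_induct)
  case less
  show ?case
  proof (cases "red n a m")
    case True
    then show ?thesis
      using less.prems J0 mvars_single[of m x] by (intro exI[of _ "sg m x"]) auto
  next
    case False
    then obtain i where i: "i \<in> {1..n}" and ai: "a i \<le> lk m i"
      unfolding red_def by (auto simp: not_less)
    obtain k where k: "i = Suc k" using i by (cases i) auto
    define m0 where "m0 = m - sg i (a i)"
    have lk_m0: "lk m0 j = lk m j - (a i when i = j)" for j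
      by (simp add: m0_def minus_poly_mapping.rep_eq lookup_single)
    have m_eq: "m = m0 + sg i (a i)"
      by (rule poly_mapping_eqI) (use ai in \<open>auto simp: lookup_add lk_m0 lookup_single when_def\<close>)
    have km0: "ks m0 \<subseteq> ks m"
      by (auto simp: in_keys_iff lk_m0)
    define m' where "m' = m0 + sg (i - 1) (b i)"
    have km': "ks m' \<subseteq> {0..n}"
      using km0 less.prems i by (auto simp: m'_def keys_nat_add)
    have "wt n (Cw b) m' < wt n (Cw b) m"
    proof -
      have in1: "i - 1 \<le> n" "i \<le> n" using i by auto
      have "b i * Cw b (i - 1) < a i * Cw b i"
      proof -
        have "b i * Cw b k < (b i + 1) * Cw b k" using Cw_pos[of b k] by simp
        also have "\<dots> \<le> a i * ((b i + 1) * Cw b k)"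
        proof -
          have "a i \<ge> 1" using pos i by (simp add: Suc_le_eq)
          then show ?thesis by simp
        qed
        finally show ?thesis using k by (simp add: Cw_Suc mult.commute)
      qed
      then show ?thesis
        unfolding m'_def using m_eq in1 by (simp add: wt_add wt_single)
    qed
    from units i obtain v where v: "u i * v = 1"
      by (metis dvdE)
    obtain r where
      r: "mvars r \<subseteq> {0..n}" "\<forall>m'\<in>ks r. red n a m'" "sg m' (- (x * v)) - r \<in> J"
      using \<open>wt n (Cw b) m' < wt n (Cw b) m\<close> less.hyps km' by blast
    define g :: "'a mpoly" where "g = Const (u i) * Var i ^ a i + Var (i - 1) ^ b i"
    have gJ: "g \<in> J" using gens i g_def by auto
    have "sg m0 (x * v) * g = sg m x + sg m' (x * v)"
    proof -
      have "sg m0 (x * v) * g = sg m0 (x * v) * (sg (sg i (a i)) (u i) + sg (sg (i - 1) (b i)) 1)"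
        by (simp add: g_def Var_pow Const_mult_single)
      also have "\<dots> = sg m x + sg m' (x * v)"
      proof -
        have xv: "v * (x * u i) = x" using v by (metis mult.left_commute mult.commute mult_1_right)
        show ?thesis by (simp add: distrib_left mult_single m_eq m'_def algebra_simps) (simp only: xv)
      qed
      finally show ?thesis .
    qed
    then have "sg m x - r = sg m0 (x * v) * g + (sg m' (- (x * v)) - r)"
      by (simp add: single_uminus)
    moreover have "sg m0 (x * v) * g \<in> J"
      using Jmul[OF gJ] mvars_single[of m0 "x * v"] km0 less.prems by blast
    ultimately have "sg m x - r \<in> J" using Jadd[OF _ r(3)] by metis
    then show ?thesis using r by blast
  qed
qed


lemma reduce_all:
  fixes J :: "'a::idom mpoly set"
  assumes Jadd: "\<And>x y. x \<in> J \<Longrightarrow> y \<in> J \<Longrightarrow> x + y \<in> J"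
    and Jmul: "\<And>x y. x \<in> J \<Longrightarrow> mvars y \<subseteq> {0..n} \<Longrightarrow> y * x \<in> J"
    and J0: "0 \<in> J"
    and gens: "\<forall>i\<in>{1..n}. Const (u i) * Var i ^ a i + Var (i - 1) ^ b i \<in> J"
    and units: "\<forall>i\<in>{1..n}. u i dvd 1"
    and pos: "\<forall>i\<in>{1..n}. a i > 0 \<and> b i > 0"
    and p: "mvars p \<subseteq> {0..n}"
  shows "\<exists>r. mvars r \<subseteq> {0..n} \<and> (\<forall>m'\<in>ks r. red n a m') \<and> p - r \<in> J"
proof -
  have "finite A \<Longrightarrow> A \<subseteq> ks p \<Longrightarrow>
    \<exists>r. mvars r \<subseteq> {0..n} \<and> (\<forall>m'\<in>ks r. red n a m') \<and> (\<Sum>m\<in>A. sg m (lk p m)) - r \<in> J" for A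
  proof (induction A rule: finite_induct)
    case empty
    then show ?case using J0 by (intro exI[of _ 0]) (simp add: mvars_zero)
  next
    case (insert x F)
    have kx: "ks x \<subseteq> {0..n}" using insert.prems p by (auto simp: mvars_def)
    obtain r1 where r1: "mvars r1 \<subseteq> {0..n}" "\<forall>m'\<in>ks r1. red n a m'" "sg x (lk p x) - r1 \<in> J"
      using reduce_mono[OF Jadd Jmul J0 gens units pos kx] by blast
    obtain r2 where r2: "mvars r2 \<subseteq> {0..n}" "\<forall>m'\<in>ks r2. red n a m'"
        "(\<Sum>m\<in>F. sg m (lk p m)) - r2 \<in> J"
      using insert by blast
    have eqn: "(\<Sum>m\<in>insert x F. sg m (lk p m)) - (r1 + r2) =
        (sg x (lk p x) - r1) + ((\<Sum>m\<in>F. sg m (lk p m)) - r2)"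
      using insert.hyps by (simp add: algebra_simps)
    have "(\<Sum>m\<in>insert x F. sg m (lk p m)) - (r1 + r2) \<in> J"
      unfolding eqn by (rule Jadd[OF r1(3) r2(3)])
    moreover have "mvars (r1 + r2) \<subseteq> {0..n}" using mvars_add[of r1 r2] r1 r2 by blast
    moreover have "\<forall>m'\<in>ks (r1 + r2). red n a m'" using keys_add[of r1 r2] r1 r2 by blast
    ultimately show ?case by blast
  qed
  from this[of "ks p"] show ?thesis by (simp flip: mpoly_expand)
qed

lemma phi_red_zero:
  assumes cnz: "\<forall>i\<le>n. c i \<noteq> 0"
    and inj: "\<And>m m'. ks m \<subseteq> {0..n} \<Longrightarrow> ks m' \<subseteq> {0..n} \<Longrightarrow> red n a m \<Longrightarrow> red n a m'
       \<Longrightarrow> wt n e m = wt n e m' \<Longrightarrow> m = m'"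
    and r: "mvars r \<subseteq> {0..n}" "\<forall>m'\<in>ks r. red n a m'" "phi n c e r = 0"
  shows "r = 0"
proof (rule ccontr)
  assume "r \<noteq> 0"
  then obtain m0 where m0: "m0 \<in> ks r" by fastforce
  have km: "\<And>m. m \<in> ks r \<Longrightarrow> ks m \<subseteq> {0..n}" using r(1) by (auto simp: mvars_def)
  have "coeff (phi n c e r) (wt n e m0) =
      (\<Sum>m\<in>ks r. if wt n e m = wt n e m0 then emb (lk r m) * gm n c m else 0)"
    by (simp add: phi_def coeff_sum coeff_monom)
  also have "\<dots> = (if wt n e m0 = wt n e m0 then emb (lk r m0) * gm n c m0 else 0)
      + (\<Sum>m\<in>ks r - {m0}. if wt n e m = wt n e m0 then emb (lk r m) * gm n c m else 0)"
    by (rule sum.remove[OF finite_keys m0])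
  also have "(\<Sum>m\<in>ks r - {m0}. if wt n e m = wt n e m0 then emb (lk r m) * gm n c m else 0) = 0"
  proof (rule sum.neutral, rule ballI)
    fix m assume m: "m \<in> ks r - {m0}"
    have "wt n e m \<noteq> wt n e m0"
      using inj[of m m0] m m0 km r(2) by auto
    then show "(if wt n e m = wt n e m0 then emb (lk r m) * gm n c m else 0) = 0" by simp
  qed
  finally have "coeff (phi n c e r) (wt n e m0) = emb (lk r m0) * gm n c m0" by simp
  moreover have "emb (lk r m0) * gm n c m0 \<noteq> 0"
    using m0 gm_nonzero[of n c m0] cnz by (simp add: in_keys_iff)
  ultimately show False using r(3) by simp
qed


lemma mvars_closed:
  "mvars p \<subseteq> A \<Longrightarrow> mvars q \<subseteq> A \<Longrightarrow> mvars (p + q) \<subseteq> A"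
  "mvars (p::'a::comm_ring_1 mpoly) \<subseteq> A \<Longrightarrow> mvars q \<subseteq> A \<Longrightarrow> mvars (p * q) \<subseteq> A"
  "mvars (p::'a::comm_ring_1 mpoly) \<subseteq> A \<Longrightarrow> mvars (- p) \<subseteq> A"
  using mvars_add[of p q] mvars_mult[of p q] mvars_uminus[of p] by auto

theorem lemma4p1:
  fixes u :: "nat \<Rightarrow> 'a::idom" and a b :: "nat \<Rightarrow> nat" and n :: nat
  assumes units: "\<forall>i\<in>{1..n}. u i dvd 1"
    and pos: "\<forall>i\<in>{1..n}. a i > 0 \<and> b i > 0"
    and cop: "\<forall>i\<in>{1..n}. coprime (a i) (\<Prod>j=1..i. b j)"
  shows "primeideal
           (genideal (poly_ring_upto n)
              {Const (u i) * Var i ^ a i + Var (i - 1) ^ b i | i. i \<in> {1..n}})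
           (poly_ring_upto n)
       \<and> Var n \<notin> genideal (poly_ring_upto n)
              {Const (u i) * Var i ^ a i + Var (i - 1) ^ b i | i. i \<in> {1..n}}"
proof -
  define S :: "'a mpoly set" where "S = {Const (u i) * Var i ^ a i + Var (i - 1) ^ b i | i. i \<in> {1..n}}"
  define C :: "'a mpoly set" where "C = {p. mvars p \<subseteq> {0..n}}"
  let ?R = "poly_ring_upto n :: 'a mpoly ring"
  let ?U = "ring_of_type_algebra :: 'a mpoly ring"
  have R_eq: "?R = ?U\<lparr>carrier := C\<rparr>"
    by (simp add: poly_ring_upto_def ring_of_type_algebra_def C_def)
  have carR: "carrier ?R = C" by (simp add: poly_ring_upto_def C_def)
  have addR: "x \<oplus>\<^bsub>?R\<^esub> y = x + y" for x y by (simp add: poly_ring_upto_def)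
  have mulR: "x \<otimes>\<^bsub>?R\<^esub> y = x * y" for x y by (simp add: poly_ring_upto_def)
  have zeroR: "\<zero>\<^bsub>?R\<^esub> = 0" by (simp add: poly_ring_upto_def)
  have oneR: "\<one>\<^bsub>?R\<^esub> = 1" by (simp add: poly_ring_upto_def)
  interpret U: cring ?U by (rule cring_from_type_algebra)
  have ainv: "\<ominus>\<^bsub>?U\<^esub> x = - x" for x
    by (rule U.minus_equality) (simp_all add: ring_of_type_algebra_def)
  have sub: "subcring C ?U"
  proof (rule U.subcringI', rule U.subringI)
    show "C \<subseteq> carrier ?U" by (simp add: ring_of_type_algebra_def)
    show "\<one>\<^bsub>?U\<^esub> \<in> C" by (simp add: ring_of_type_algebra_def C_def mvars_one)
  next
    fix h assume "h \<in> C"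
    then show "\<ominus>\<^bsub>?U\<^esub> h \<in> C" unfolding ainv C_def using mvars_closed(3) by auto
  next
    fix h1 h2 assume "h1 \<in> C" "h2 \<in> C"
    then show "h1 \<otimes>\<^bsub>?U\<^esub> h2 \<in> C" "h1 \<oplus>\<^bsub>?U\<^esub> h2 \<in> C"
      by (simp_all add: ring_of_type_algebra_def C_def mvars_closed)
  qed
  have cR: "cring ?R" using U.subcring_iff[of C] sub R_eq
    by (simp add: ring_of_type_algebra_def)
  interpret R: cring ?R by (rule cR)
  have gen_in: "Const (u i) * Var i ^ a i + Var (i - 1) ^ b i \<in> C" if "i \<in> {1..n}" for i
  proof -
    have m1: "mvars (sg (sg i (a i)) (u i) :: 'a mpoly) \<subseteq> {0..n}"
      using that mvars_single[of "sg i (a i)" "u i"] by (auto split: if_splits)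
    have m2: "mvars (sg (sg (i - 1) (b i)) 1 :: 'a mpoly) \<subseteq> {0..n}"
      using that mvars_single[of "sg (i - 1) (b i)" "1::'a"] by (auto split: if_splits)
    have "mvars (Const (u i) * Var i ^ a i + Var (i - 1) ^ b i :: 'a mpoly) \<subseteq> {0..n}"
      unfolding Var_pow Const_mult_single using mvars_closed(1)[OF m1 m2] by simp
    then show ?thesis by (simp add: C_def)
  qed
  have SC: "S \<subseteq> carrier ?R" using gen_in by (auto simp: S_def carR)
  define J where "J = genideal ?R S"
  have idJ: "ideal J ?R" unfolding J_def by (rule R.genideal_ideal[OF SC])
  interpret J: ideal J ?R by (rule idJ)
  have Jadd: "x \<in> J \<Longrightarrow> y \<in> J \<Longrightarrow> x + y \<in> J" for x y
    using J.a_closed[of x y] by (simp add: addR)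
  have Jmul: "x \<in> J \<Longrightarrow> mvars y \<subseteq> {0..n} \<Longrightarrow> y * x \<in> J" for x y
    using J.I_l_closed[of x y] by (simp add: mulR carR C_def)
  have J0: "0 \<in> J" using J.zero_closed by (simp add: zeroR)
  have SJ: "S \<subseteq> J" unfolding J_def by (rule R.genideal_self[OF SC])
  have gens: "\<forall>i\<in>{1..n}. Const (u i) * Var i ^ a i + Var (i - 1) ^ b i \<in> J"
    using SJ unfolding S_def by blast
  have JC: "J \<subseteq> C" using J.a_subset carR by simp
  have unz: "\<forall>i\<in>{1..n}. u i \<noteq> 0" using units by auto
  define c where "c = croot a b u"
  define e where "e = ew a b n"
  have cnz: "\<forall>i\<le>n. c i \<noteq> 0" and crel: "\<forall>i\<in>{1..n}. emb (u i) * c i ^ a i = - (c (i - 1) ^ b i)"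
    using croot_props[of n a u b] pos unz by (simp_all add: c_def)
  let ?T = "ring_of_type_algebra :: 'a fract alg_closure poly ring"
  interpret T: cring ?T by (rule cring_from_type_algebra)
  have hom: "phi n c e \<in> ring_hom ?R ?T"
    by (rule ring_hom_memI)
       (simp_all add: poly_ring_upto_def ring_of_type_algebra_def phi_mult phi_add)
  have hr: "ring_hom_ring ?R ?T (phi n c e)"
    by (rule ring_hom_ringI2[OF R.ring_axioms T.ring_axioms hom])
  have ker: "a_kernel ?R ?T (phi n c e) = {p \<in> C. phi n c e p = 0}"
    by (simp add: a_kernel_def' carR ring_of_type_algebra_def)
  have phi_gen: "phi n c e (Const (u i) * Var i ^ a i + Var (i - 1) ^ b i) = 0" if i: "i \<in> {1..n}" for i
  proof -
    have i1: "i \<le> n" "i - 1 \<le> n" using i by auto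
    have "phi n c e (Const (u i) * Var i ^ a i + Var (i - 1) ^ b i)
        = monom (emb (u i) * c i ^ a i) (a i * e i) + monom (c (i - 1) ^ b i) (b i * e (i - 1))"
      using i1 by (simp add: Var_pow Const_mult_single phi_add phi_single gm_single wt_single)
    also have "\<dots> = 0"
      using crel i ew_rel[OF i, of a b] by (simp add: e_def add_monom)
    finally show ?thesis .
  qed
  have Sker: "S \<subseteq> a_kernel ?R ?T (phi n c e)"
    using gen_in phi_gen by (auto simp: ker S_def)
  have J_sub: "J \<subseteq> {p \<in> C. phi n c e p = 0}"
    using R.genideal_minimal[OF ring_hom_ring.kernel_is_ideal[OF hr] Sker] ker J_def by simp
  have winj: "m = m'" if "ks m \<subseteq> {0..n}" "ks m' \<subseteq> {0..n}" "red n a m" "red n a m'"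
       "wt n e m = wt n e m'" for m m'
  proof (rule poly_mapping_eqI)
    fix i
    have all: "\<forall>i\<le>n. lk m i = lk m' i"
      by (rule wt_inj_aux[of n a b]) (use that pos cop in \<open>auto simp: red_def wt_def e_def\<close>)
    show "lk m i = lk m' i"
    proof (cases "i \<le> n")
      case True then show ?thesis using all by simp
    next
      case False
      then have "i \<notin> ks m" "i \<notin> ks m'" using that(1,2) by auto
      then show ?thesis by (simp add: in_keys_iff)
    qed
  qed
  have ker_sub: "p \<in> J" if "p \<in> C" "phi n c e p = 0" for p
  proof -
    have "\<exists>r. mvars r \<subseteq> {0..n} \<and> (\<forall>m'\<in>ks r. red n a m') \<and> p - r \<in> J"
      apply (rule reduce_all[where J=J and p=p])
            apply (erule (1) Jadd)
           apply (erule (1) Jmul)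
          apply (rule J0)
         apply (rule gens)
        apply (rule units)
       apply (rule pos)
      using that(1) apply (simp add: C_def)
      done
    then obtain r where r: "mvars r \<subseteq> {0..n}" "\<forall>m'\<in>ks r. red n a m'" "p - r \<in> J"
      by blast
    have "phi n c e (p - r) = 0" using J_sub r(3) by auto
    then have "phi n c e r = 0" using that(2) by (simp add: phi_diff)
    then have "r = 0" using phi_red_zero[OF cnz winj r(1,2)] by blast
    then show ?thesis using r(3) by simp
  qed
  have J_eq: "J = {p \<in> C. phi n c e p = 0}" using J_sub ker_sub by blast
  have one_notin: "1 \<notin> J" using J_eq by simp
  have prime: "primeideal J ?R"
  proof (rule primeidealI[OF idJ cR])
    show "carrier ?R \<noteq> J" using one_notin R.one_closed by (auto simp: oneR)
  next
    fix x y assume "x \<in> carrier ?R" "y \<in> carrier ?R" "x \<otimes>\<^bsub>?R\<^esub> y \<in> J"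
    then show "x \<in> J \<or> y \<in> J"
      by (simp add: J_eq mulR carR phi_mult)
  qed
  have "phi n c e (Var n) \<noteq> 0"
    using cnz by (simp add: Var_def phi_single gm_single wt_single)
  then have "Var n \<notin> J" using J_eq by simp
  then show ?thesis using prime by (simp add: J_def S_def)
qed

end
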